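(* Let $k,m \in \mathbb{N}$, and let $G$ be an ordered graph with irreducible block decomposition $(G_1, \ldots, G_m)$. If $|\{i \in [m] : G_i \notin \mathcal{J}\}| \geqslant k$, then $S_n(G) \geqslant 2^{n-1}$ for every $n \leqslant k$.
   Context: Ordered graphs of order $n$ have vertex set $[n]$ with the natural order. A pair of vertices $u<v$ separates the edges of $G$ if every edge $ij$ ($i<j$) has $j\leqslant u$ or $v\leqslant i$; $G$ is irreducible if no pair separates its edges. $G_1+\dots+G_m$ places copies of $G_1,\dots,G_m$ consecutively from left to right with no edges between copies; every ordered graph is uniquely $G_1+\dots+G_m$ with all $G_i$ irreducible, and $(G_1,\dots,G_m)$ is its irreducible block decomposition. $S_n(G)$ is the number of distinct (non-isomorphic as ordered graphs) induced ordered subgraphs of $G$ of order $n$. For $n\in\mathbb{N}$: $J^{(n)}_1=K_n$; $J^{(n)}_2$ on $[n]$ with edge set $\{1n\}$ if $n\geqslant 2$ (empty if $n=1$); $J^{(n)}_3$ on $[n]$ with edges $\{1i: 2\leqslant i\leqslant n\}$; $J^{(n)}_4$ on $[n]$ with edges $\{in: 1\leqslant i\leqslant n-1\}$; $L^{(n)}$ on $[n]$ with edges $\{i(i+1)\}$; $Q_1$ on $[4]$ with edges $\{13,24\}$; $Q_2$ on $[4]$ with edges $\{14,23\}$. $\mathcal{J}$ is the set of all $J^{(n)}_i$, $L^{(n)}$ ($n\in\mathbb{N}$, $i\in[4]$), $Q_1$, $Q_2$. *)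

theory Defs
  imports Main
begin

text \<open>An ordered graph of order n: vertex set {1..n} with natural order; edges are
  pairs (i,j) with 1 \<le> i < j \<le> n.\<close>
type_synonym ograph = "nat \<times> (nat \<times> nat) set"

definition ord_of :: "ograph \<Rightarrow> nat" where "ord_of G = fst G"
definition edges :: "ograph \<Rightarrow> (nat \<times> nat) set" where "edges G = snd G"

definition is_ograph :: "ograph \<Rightarrow> bool" where
  "is_ograph G \<longleftrightarrow> edges G \<subseteq> {(i,j). 1 \<le> i \<and> i < j \<and> j \<le> ord_of G}"

definition separates :: "ograph \<Rightarrow> nat \<Rightarrow> nat \<Rightarrow> bool" where
  "separates G u v \<longleftrightarrow> (\<forall>(i,j) \<in> edges G. j \<le> u \<or> v \<le> i)"

definition irreducible_og :: "ograph \<Rightarrow> bool" where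
  "irreducible_og G \<longleftrightarrow>
     \<not> (\<exists>u v. 1 \<le> u \<and> u < v \<and> v \<le> ord_of G \<and> separates G u v)"

definition osum :: "ograph \<Rightarrow> ograph \<Rightarrow> ograph" where
  "osum G H = (ord_of G + ord_of H,
     edges G \<union> {(i + ord_of G, j + ord_of G) | i j. (i,j) \<in> edges H})"

definition osum_list :: "ograph list \<Rightarrow> ograph" where
  "osum_list Gs = foldr osum Gs (0, {})"

definition block_decomp :: "ograph \<Rightarrow> ograph list \<Rightarrow> bool" where
  "block_decomp G Gs \<longleftrightarrow>
     (\<forall>H \<in> set Gs. is_ograph H \<and> ord_of H \<ge> 1 \<and> irreducible_og H) \<and> G = osum_list Gs"

text \<open>Induced ordered subgraph on a vertex set S, relabelled order-preservingly onto {1..|S|}.\<close>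
definition rank_in :: "nat set \<Rightarrow> nat \<Rightarrow> nat" where
  "rank_in S x = card {y \<in> S. y \<le> x}"

definition induced :: "ograph \<Rightarrow> nat set \<Rightarrow> ograph" where
  "induced G S = (card S,
     {(rank_in S x, rank_in S y) | x y. x \<in> S \<and> y \<in> S \<and> (x,y) \<in> edges G})"

definition S_count :: "nat \<Rightarrow> ograph \<Rightarrow> nat" where
  "S_count n G = card {induced G S | S. S \<subseteq> {1..ord_of G} \<and> card S = n}"

definition J1 :: "nat \<Rightarrow> ograph" where
  "J1 n = (n, {(i,j). 1 \<le> i \<and> i < j \<and> j \<le> n})"
definition J2 :: "nat \<Rightarrow> ograph" where
  "J2 n = (n, if n \<ge> 2 then {(1,n)} else {})"
definition J3 :: "nat \<Rightarrow> ograph" where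
  "J3 n = (n, {(1,i) | i. 2 \<le> i \<and> i \<le> n})"
definition J4 :: "nat \<Rightarrow> ograph" where
  "J4 n = (n, {(i,n) | i. 1 \<le> i \<and> i \<le> n - 1})"
definition Lg :: "nat \<Rightarrow> ograph" where
  "Lg n = (n, {(i,i+1) | i. 1 \<le> i \<and> i + 1 \<le> n})"
definition Q1 :: ograph where "Q1 = (4, {(1,3),(2,4)})"
definition Q2 :: ograph where "Q2 = (4, {(1,4),(2,3)})"

definition Jfam :: "ograph set" where
  "Jfam = (\<Union>n \<in> {1..}. {J1 n, J2 n, J3 n, J4 n, Lg n}) \<union> {Q1, Q2}"

end

theory Submission
  imports Defs
begin

lemma irred_char:
  "irreducible_og G \<longleftrightarrow> (\<forall>u. 1 \<le> u \<and> u < ord_of G \<longrightarrow> (\<exists>(i,j)\<in>edges G. i \<le> u \<and> u < j))"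
proof
  assume H: "irreducible_og G"
  show "\<forall>u. 1 \<le> u \<and> u < ord_of G \<longrightarrow> (\<exists>(i,j)\<in>edges G. i \<le> u \<and> u < j)"
  proof (intro allI impI)
    fix u assume u: "1 \<le> u \<and> u < ord_of G"
    have "\<not> separates G u (Suc u)" using H u unfolding irreducible_og_def by auto
    then show "\<exists>(i,j)\<in>edges G. i \<le> u \<and> u < j" unfolding separates_def by fastforce
  qed
next
  assume H: "\<forall>u. 1 \<le> u \<and> u < ord_of G \<longrightarrow> (\<exists>(i,j)\<in>edges G. i \<le> u \<and> u < j)"
  show "irreducible_og G" unfolding irreducible_og_def separates_def
  proof clarify
    fix u v assume a: "1 \<le> u" "u < v" "v \<le> ord_of G" "\<forall>(i,j)\<in>edges G. j \<le> u \<or> v \<le> i"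
    then obtain i j where "(i,j) \<in> edges G" "i \<le> u" "u < j" using H by fastforce
    then show False using a by fastforce
  qed
qed

lemma rank3:
  assumes "a < b" "b < c"
  shows "rank_in {a,b,c} a = 1" "rank_in {a,b,c} b = 2" "rank_in {a,b,c} c = 3"
proof -
  have "{y \<in> {a,b,c}. y \<le> a} = {a}" using assms by auto
  then show "rank_in {a,b,c} a = 1" by (simp add: rank_in_def)
  have "{y \<in> {a,b,c}. y \<le> b} = {a,b}" using assms by auto
  then show "rank_in {a,b,c} b = 2" using assms by (simp add: rank_in_def)
  have "{y \<in> {a,b,c}. y \<le> c} = {a,b,c}" using assms by auto
  then show "rank_in {a,b,c} c = 3" using assms by (simp add: rank_in_def)
qed

lemma ind3:
  assumes "a < b" "b < c" and og: "\<forall>x y. (x,y) \<in> edges A \<longrightarrow> x < y"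
  shows "induced A {a,b,c} = (3, {p. (p = (1,2) \<and> (a,b) \<in> edges A) \<or> (p = (1,3) \<and> (a,c) \<in> edges A) \<or> (p = (2,3) \<and> (b,c) \<in> edges A)})"
proof -
  have c: "card {a,b,c} = 3" using assms by auto
  have r: "rank_in {a,b,c} a = 1" "rank_in {a,b,c} b = 2" "rank_in {a,b,c} c = 3" using rank3 assms by auto
  have "{(rank_in {a,b,c} x, rank_in {a,b,c} y) | x y. x \<in> {a,b,c} \<and> y \<in> {a,b,c} \<and> (x,y) \<in> edges A}
     = {p. (p = (1,2) \<and> (a,b) \<in> edges A) \<or> (p = (1,3) \<and> (a,c) \<in> edges A) \<or> (p = (2,3) \<and> (b,c) \<in> edges A)}"
  proof (rule set_eqI, rule iffI)
    fix p :: "nat \<times> nat" assume "p \<in> {(rank_in {a,b,c} x, rank_in {a,b,c} y) | x y. x \<in> {a,b,c} \<and> y \<in> {a,b,c} \<and> (x,y) \<in> edges A}"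
    then obtain x y where p: "p = (rank_in {a,b,c} x, rank_in {a,b,c} y)" and xy: "x \<in> {a,b,c}" "y \<in> {a,b,c}" and e: "(x,y) \<in> edges A" by blast
    have "x < y" using og e by blast
    then have "(x,y) = (a,b) \<or> (x,y) = (a,c) \<or> (x,y) = (b,c)" using xy assms(1,2) by auto
    then show "p \<in> {p. (p = (1,2) \<and> (a,b) \<in> edges A) \<or> (p = (1,3) \<and> (a,c) \<in> edges A) \<or> (p = (2,3) \<and> (b,c) \<in> edges A)}"
      using r p e by auto
  next
    fix p :: "nat \<times> nat" assume "p \<in> {p. (p = (1,2) \<and> (a,b) \<in> edges A) \<or> (p = (1,3) \<and> (a,c) \<in> edges A) \<or> (p = (2,3) \<and> (b,c) \<in> edges A)}"
    then show "p \<in> {(rank_in {a,b,c} x, rank_in {a,b,c} y) | x y. x \<in> {a,b,c} \<and> y \<in> {a,b,c} \<and> (x,y) \<in> edges A}"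
      using r by (smt (verit) insertCI mem_Collect_eq)
  qed
  then show ?thesis unfolding induced_def using c by simp
qed

definition irr3 :: "(nat \<times> nat) set \<Rightarrow> nat \<Rightarrow> nat \<Rightarrow> nat \<Rightarrow> bool" where
  "irr3 E a b c \<longleftrightarrow> ((a,b) \<in> E \<or> (a,c) \<in> E) \<and> ((a,c) \<in> E \<or> (b,c) \<in> E)"
definition tp3 :: "(nat \<times> nat) set \<Rightarrow> nat \<Rightarrow> nat \<Rightarrow> nat \<Rightarrow> bool \<times> bool \<times> bool" where
  "tp3 E a b c = ((a,b) \<in> E, (a,c) \<in> E, (b,c) \<in> E)"
definition irr4 :: "(nat \<times> nat) set \<Rightarrow> nat \<Rightarrow> nat \<Rightarrow> nat \<Rightarrow> nat \<Rightarrow> bool" where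
  "irr4 E a b c d \<longleftrightarrow> ((a,b) \<in> E \<or> (a,c) \<in> E \<or> (a,d) \<in> E) \<and>
     ((a,c) \<in> E \<or> (a,d) \<in> E \<or> (b,c) \<in> E \<or> (b,d) \<in> E) \<and> ((a,d) \<in> E \<or> (b,d) \<in> E \<or> (c,d) \<in> E)"
definition tp4 :: "(nat \<times> nat) set \<Rightarrow> nat \<Rightarrow> nat \<Rightarrow> nat \<Rightarrow> nat \<Rightarrow> bool \<times> bool \<times> bool \<times> bool \<times> bool \<times> bool" where
  "tp4 E a b c d = ((a,b) \<in> E, (a,c) \<in> E, (a,d) \<in> E, (b,c) \<in> E, (b,d) \<in> E, (c,d) \<in> E)"

locale sg =
  fixes E :: "(nat \<times> nat) set" and h :: nat
  assumes wf: "\<And>i j. (i,j) \<in> E \<Longrightarrow> 1 \<le> i \<and> i < j \<and> j \<le> h"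
    and irr: "\<And>u. 1 \<le> u \<Longrightarrow> u < h \<Longrightarrow> \<exists>i j. (i,j) \<in> E \<and> i \<le> u \<and> u < j"
begin

lemma caseK3:
  assumes UT: "\<And>a b c. a < b \<Longrightarrow> b < c \<Longrightarrow> irr3 E a b c \<Longrightarrow> (a,b) \<in> E \<and> (a,c) \<in> E \<and> (b,c) \<in> E"
  shows "E = {(i,j). 1 \<le> i \<and> i < j \<and> j \<le> h}"
proof -
  have main: "\<forall>x. 1 \<le> x \<and> x < y \<longrightarrow> (x,y) \<in> E" if "y \<le> h" for y
    using that
  proof (induction y rule: less_induct)
    case (less y)
    show ?case
    proof (intro allI impI)
      fix x assume x: "1 \<le> x \<and> x < y"
      have u: "1 \<le> y - 1" "y - 1 < h" using x less.prems by auto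
      obtain i j where ij: "(i,j) \<in> E" "i \<le> y - 1" "y - 1 < j" using irr[OF u] by blast
      have iy: "(i,y) \<in> E"
      proof (cases "j = y")
        case True then show ?thesis using ij by simp
      next
        case False
        then have "i < y" "y < j" using ij x by auto
        then show ?thesis using UT[of i y j] ij unfolding irr3_def by blast
      qed
      have i1: "1 \<le> i" using wf[OF ij(1)] by simp
      have iy': "i < y" using ij x by auto
      consider "x = i" | "i < x" | "x < i" by linarith
      then show "(x,y) \<in> E"
      proof cases
        case 1 then show ?thesis using iy by simp
      next
        case 2 then show ?thesis using UT[of i x y] iy x unfolding irr3_def by blast
      next
        case 3
        have "(x,i) \<in> E" using less.IH[of i] iy' less.prems 3 x by auto
        then show ?thesis using UT[of x i y] iy 3 iy' unfolding irr3_def by blast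
      qed
    qed
  qed
  show ?thesis
  proof (rule set_eqI)
    fix p :: "nat \<times> nat"
    obtain x y where p: "p = (x,y)" by (cases p)
    show "p \<in> E \<longleftrightarrow> p \<in> {(i,j). 1 \<le> i \<and> i < j \<and> j \<le> h}"
      using main[of y] wf[of x y] p by auto
  qed
qed

lemma caseL3:
  assumes UT: "\<And>a b c. a < b \<Longrightarrow> b < c \<Longrightarrow> irr3 E a b c \<Longrightarrow> (a,c) \<notin> E"
  shows "E = {(i,i+1) | i. 1 \<le> i \<and> i + 1 \<le> h}"
proof -
  have short: "y = x + 1" if "(x,y) \<in> E" for x y
  proof (rule ccontr)
    assume "y \<noteq> x + 1"
    then have "x < x + 1" "x + 1 < y" using wf[OF that] by auto
    then show False using UT[of x "x+1" y] that unfolding irr3_def by blast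
  qed
  show ?thesis
  proof (rule set_eqI)
    fix p :: "nat \<times> nat"
    obtain x y where p: "p = (x,y)" by (cases p)
    show "p \<in> E \<longleftrightarrow> p \<in> {(i,i+1) | i. 1 \<le> i \<and> i + 1 \<le> h}"
    proof
      assume "p \<in> E" then show "p \<in> {(i,i+1) | i. 1 \<le> i \<and> i + 1 \<le> h}"
        using short[of x y] wf[of x y] p by auto
    next
      assume "p \<in> {(i,i+1) | i. 1 \<le> i \<and> i + 1 \<le> h}"
      then have y: "y = x + 1" "1 \<le> x" "x + 1 \<le> h" using p by auto
      obtain i j where ij: "(i,j) \<in> E" "i \<le> x" "x < j" using irr[of x] y by auto
      have "j = i + 1" using short ij by auto
      then have "i = x" using ij by auto
      then show "p \<in> E" using ij y p \<open>j = i + 1\<close> \<open>i = x\<close> by auto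
    qed
  qed
qed

lemma caseJ3:
  assumes UT: "\<And>a b c. a < b \<Longrightarrow> b < c \<Longrightarrow> irr3 E a b c \<Longrightarrow> (a,b) \<in> E \<and> (b,c) \<notin> E"
  shows "E = {(1,i) | i. 2 \<le> i \<and> i \<le> h}"
proof -
  have main: "2 \<le> y \<longrightarrow> (1,y) \<in> E" if "y \<le> h" for y
    using that
  proof (induction y rule: less_induct)
    case (less y)
    show ?case
    proof
      assume y2: "2 \<le> y"
      have u: "1 \<le> y - 1" "y - 1 < h" using y2 less.prems by auto
      obtain i j where ij: "(i,j) \<in> E" "i \<le> y - 1" "y - 1 < j" using irr[OF u] by blast
      have i1: "1 \<le> i" using wf[OF ij(1)] by simp
      show "(1,y) \<in> E"
      proof (cases "i = 1")
        case True
        show ?thesis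
        proof (cases "j = y")
          case True then show ?thesis using ij \<open>i = 1\<close> by simp
        next
          case False
          then have "1 < y" "y < j" using ij y2 by auto
          then show ?thesis using UT[of 1 y j] ij \<open>i = 1\<close> unfolding irr3_def by blast
        qed
      next
        case False
        then have "2 \<le> i" "i < y" using i1 ij y2 by auto
        then have "(1,i) \<in> E" using less.IH[of i] less.prems by auto
        moreover have "i < j" using wf[OF ij(1)] by simp
        ultimately have "(i,j) \<notin> E" using UT[of 1 i j] \<open>2 \<le> i\<close> unfolding irr3_def by auto
        then show ?thesis using ij by simp
      qed
    qed
  qed
  have left: "x = 1" if "(x,y) \<in> E" for x y
  proof (rule ccontr)
    assume "x \<noteq> 1"
    then have "1 < x" "x < y" "2 \<le> y" "y \<le> h" using wf[OF that] by auto
    then have "(1,y) \<in> E" using main by auto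
    then show False using UT[of 1 x y] that \<open>1 < x\<close> \<open>x < y\<close> unfolding irr3_def by blast
  qed
  show ?thesis
  proof (rule set_eqI)
    fix p :: "nat \<times> nat"
    obtain x y where p: "p = (x,y)" by (cases p)
    show "p \<in> E \<longleftrightarrow> p \<in> {(1,i) | i. 2 \<le> i \<and> i \<le> h}"
      using main[of y] wf[of x y] left[of x y] p by auto
  qed
qed

lemma caseJ4:
  assumes UT: "\<And>a b c. a < b \<Longrightarrow> b < c \<Longrightarrow> irr3 E a b c \<Longrightarrow> (a,b) \<notin> E \<and> (b,c) \<in> E"
  shows "E = {(i,h) | i. 1 \<le> i \<and> i \<le> h - 1}"
proof -
  have main: "\<forall>x. h - x = d \<longrightarrow> 1 \<le> x \<longrightarrow> x < h \<longrightarrow> (x,h) \<in> E" for d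
  proof (induction d rule: less_induct)
    case (less d)
    show ?case
    proof (intro allI impI)
      fix x assume x: "h - x = d" "1 \<le> x" "x < h"
      obtain i j where ij: "(i,j) \<in> E" "i \<le> x" "x < j" using irr[of x] x by auto
      have jh: "j \<le> h" using wf[OF ij(1)] by simp
      show "(x,h) \<in> E"
      proof (cases "j = h")
        case True
        show ?thesis
        proof (cases "i = x")
          case True then show ?thesis using ij \<open>j = h\<close> by simp
        next
          case False
          then have "i < x" using ij by auto
          then show ?thesis using UT[of i x h] ij \<open>j = h\<close> x unfolding irr3_def by blast
        qed
      next
        case False
        then have "j < h" using jh by simp
        have "(j,h) \<in> E" using less.IH[of "h - j"] x ij \<open>j < h\<close> by auto
        moreover have "i < j" using wf[OF ij(1)] by simp
        ultimately have "(i,j) \<notin> E" using UT[of i j h] \<open>j < h\<close> unfolding irr3_def by auto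
        then show ?thesis using ij by simp
      qed
    qed
  qed
  have right: "y = h" if "(x,y) \<in> E" for x y
  proof (rule ccontr)
    assume "y \<noteq> h"
    then have "1 \<le> x" "x < y" "y < h" using wf[OF that] by auto
    then have "(x,h) \<in> E" using main by auto
    then show False using UT[of x y h] that \<open>x < y\<close> \<open>y < h\<close> unfolding irr3_def by blast
  qed
  show ?thesis
  proof (rule set_eqI)
    fix p :: "nat \<times> nat"
    obtain x y where p: "p = (x,y)" by (cases p)
    show "p \<in> E \<longleftrightarrow> p \<in> {(i,h) | i. 1 \<le> i \<and> i \<le> h - 1}"
      using main[of "h - x"] wf[of x y] right[of x y] p by auto
  qed
qed

lemma caseJ2:
  assumes UT: "\<And>a b c. a < b \<Longrightarrow> b < c \<Longrightarrow> irr3 E a b c \<Longrightarrow> (a,b) \<notin> E \<and> (b,c) \<notin> E"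
    and U4: "\<And>a b c d a' b' c' d'. a < b \<Longrightarrow> b < c \<Longrightarrow> c < d \<Longrightarrow> a' < b' \<Longrightarrow> b' < c' \<Longrightarrow> c' < d'
       \<Longrightarrow> irr4 E a b c d \<Longrightarrow> irr4 E a' b' c' d' \<Longrightarrow> tp4 E a b c d = tp4 E a' b' c' d'"
    and h3: "3 \<le> h"
  shows "E = {(1,h)} \<or> (h = 4 \<and> E = {(1,3),(2,4)}) \<or> (h = 4 \<and> E = {(1,4),(2,3)})"
proof -
  have M3: "y = y'" if "(x,y) \<in> E" "(x,y') \<in> E" for x y y'
  proof (rule ccontr)
    assume "y \<noteq> y'"
    then consider "y < y'" | "y' < y" by linarith
    then show False
    proof cases
      case 1
      have "x < y" using wf[OF that(1)] by simp
      then show False using UT[of x y y'] 1 that unfolding irr3_def by blast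
    next
      case 2
      have "x < y'" using wf[OF that(2)] by simp
      then show False using UT[of x y' y] 2 that unfolding irr3_def by blast
    qed
  qed
  have M4: "x = x'" if "(x,y) \<in> E" "(x',y) \<in> E" for x x' y
  proof (rule ccontr)
    assume "x \<noteq> x'"
    then consider "x < x'" | "x' < x" by linarith
    then show False
    proof cases
      case 1
      have "x' < y" using wf[OF that(2)] by simp
      then show False using UT[of x x' y] 1 that unfolding irr3_def by blast
    next
      case 2
      have "x < y" using wf[OF that(1)] by simp
      then show False using UT[of x' x y] 2 that unfolding irr3_def by blast
    qed
  qed
  have M5: False if "(x,y) \<in> E" "(y,z) \<in> E" for x y z
  proof -
    have "x < y" "y < z" using wf[OF that(1)] wf[OF that(2)] by auto
    then show False using UT[of x y z] that unfolding irr3_def by blast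
  qed
  obtain i0 c where ic: "(i0,c) \<in> E" "i0 \<le> 1" "1 < c" using irr[of 1] h3 by auto
  have "i0 = 1" using wf[OF ic(1)] ic by simp
  then have c: "(1,c) \<in> E" using ic by simp
  have ch: "c \<le> h" using wf[OF c] by simp
  show ?thesis
  proof (cases "c = h")
    case True
    show ?thesis
    proof (cases "E \<subseteq> {(1,h)}")
      case True
      then have "E = {(1,h)}" using c \<open>c = h\<close> by auto
      then show ?thesis by simp
    next
      case False
      then obtain b b' where bb: "(b,b') \<in> E" "(b,b') \<noteq> (1,h)" by auto
      have "b \<noteq> 1" using M3[OF c, of b'] bb \<open>c = h\<close> by auto
      moreover have "b' \<noteq> h" using M4[OF c, of b] bb \<open>c = h\<close> by auto
      ultimately have bb2: "1 < b" "b < b'" "b' < h" using wf[OF bb(1)] by auto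
      have ch': "(1,h) \<in> E" using c \<open>c = h\<close> by simp
      have E1: "x = 1 \<Longrightarrow> y = h" if "(x,y) \<in> E" for x y using M3[OF ch'] that by auto
      have E2: "y = h \<Longrightarrow> x = 1" if "(x,y) \<in> E" for x y using M4[OF ch'] that by auto
      show ?thesis
      proof (cases "h = 4")
        case True
        then have "b = 2" "b' = 3" using bb2 by auto
        have "E = {(1,4),(2,3)}"
        proof (rule set_eqI)
          fix p :: "nat \<times> nat"
          obtain x y where p: "p = (x,y)" by (cases p)
          show "p \<in> E \<longleftrightarrow> p \<in> {(1,4),(2,3)}"
          proof
            assume pe: "p \<in> E"
            have w: "1 \<le> x" "x < y" "y \<le> 4" using wf[of x y] pe p \<open>h = 4\<close> by auto
            consider "x = 1" | "y = 4" | "x = 2 \<and> y = 3" using w by linarith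
            then show "p \<in> {(1,4),(2,3)}"
            proof cases
              case 1 then show ?thesis using E1[of x y] pe p \<open>h = 4\<close> by auto
            next
              case 2 then show ?thesis using E2[of x y] pe p \<open>h = 4\<close> by auto
            qed (use p in auto)
          next
            assume "p \<in> {(1,4),(2,3)}"
            then show "p \<in> E" using ch' bb \<open>b = 2\<close> \<open>b' = 3\<close> \<open>h = 4\<close> by auto
          qed
        qed
        then show ?thesis using True by simp
      next
        case False
        then have h5: "5 \<le> h" using bb2 by linarith
        have t1: "tp4 E 1 b b' h = (False, False, True, True, False, False)"
          unfolding tp4_def using E1[of 1 b] E1[of 1 b'] ch' bb E2[of b h] E2[of b' h] bb2 by auto
        have i1: "irr4 E 1 b b' h" unfolding irr4_def using ch' by simp
        obtain x y where xy: "2 \<le> x" "x < y" "y \<le> 4" "(x,y) \<notin> E"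
        proof (cases "(2,3) \<in> E")
          case True
          then have "(2,4) \<notin> E" using M3[OF True, of 4] by auto
          then show ?thesis using that[of 2 4] by auto
        next
          case False
          then show ?thesis using that[of 2 3] by auto
        qed
        have t2: "tp4 E 1 x y h = (False, False, True, False, False, False)"
          unfolding tp4_def using E1[of 1 x] E1[of 1 y] ch' xy E2[of x h] E2[of y h] h5 by auto
        have i2: "irr4 E 1 x y h" unfolding irr4_def using ch' by simp
        have "tp4 E 1 b b' h = tp4 E 1 x y h"
          using U4[OF _ _ _ _ _ _ i1 i2] bb2 xy h5 by auto
        then show ?thesis using t1 t2 by simp
      qed
    qed
  next
    case False
    then have "c < h" using ch by simp
    obtain i j where ij: "(i,j) \<in> E" "i \<le> c" "c < j" using irr[of c] \<open>c < h\<close> c wf[OF c] by auto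
    have "i \<noteq> 1" using M3[OF c, of j] ij by auto
    moreover have "i \<noteq> c" using M5[OF c, of j] ij by auto
    ultimately have ic2: "1 < i" "i < c" using wf[OF ij(1)] ij by auto
    have jh: "j \<le> h" using wf[OF ij(1)] by simp
    have t1: "tp4 E 1 i c j = (False, True, False, False, True, False)"
      unfolding tp4_def using M3[OF c, of i] M3[OF c, of j] c ij M4[OF c, of i] M5[OF c, of j] ic2
      by (auto dest: M5)
    have i1: "irr4 E 1 i c j" unfolding irr4_def using c ij by simp
    have c3: "c = 3"
    proof (rule ccontr)
      assume "c \<noteq> 3"
      then have "4 \<le> c" using ic2 by linarith
      have i2: "irr4 E 1 2 3 c" unfolding irr4_def using c by simp
      have "tp4 E 1 i c j = tp4 E 1 2 3 c"
        using U4[OF _ _ _ _ _ _ i1 i2] ic2 ij \<open>4 \<le> c\<close> by auto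
      then have "(1,j) \<in> E" using c unfolding tp4_def by simp
      then show False using M3[OF c, of j] ij by simp
    qed
    then have i2: "i = 2" using ic2 by simp
    have j4: "j = 4"
    proof (rule ccontr)
      assume "j \<noteq> 4"
      then have "5 \<le> j" using ij c3 by linarith
      have ij2: "(2,j) \<in> E" using ij i2 by simp
      have i3: "irr4 E 2 3 4 j" unfolding irr4_def using ij2 by simp
      have "tp4 E 1 i c j = tp4 E 2 3 4 j"
        using U4[OF _ _ _ _ _ _ i1 i3] ic2 ij \<open>5 \<le> j\<close> by auto
      then show False using t1 ij2 unfolding tp4_def by simp
    qed
    have e13: "(1,3) \<in> E" using c c3 by simp
    have e24: "(2,4) \<in> E" using ij i2 j4 by simp
    show ?thesis
    proof (cases "h = 4")
      case True
      have "E = {(1,3),(2,4)}"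
      proof (rule set_eqI)
        fix p :: "nat \<times> nat"
        obtain x y where p: "p = (x,y)" by (cases p)
        show "p \<in> E \<longleftrightarrow> p \<in> {(1,3),(2,4)}"
        proof
          assume pe: "p \<in> E"
          then have pe': "(x,y) \<in> E" using p by simp
          have w: "1 \<le> x" "x < y" "y \<le> 4" using wf[OF pe'] \<open>h = 4\<close> by auto
          consider "x = 1" | "x = 2" | "x = 3" using w by linarith
          then show "p \<in> {(1,3),(2,4)}"
          proof cases
            case 1 then show ?thesis using M3[OF e13, of y] pe' p by auto
          next
            case 2 then show ?thesis using M3[OF e24, of y] pe' p by auto
          next
            case 3
            then have "y = 4" using w by simp
            then show ?thesis using M4[OF e24, of x] pe' 3 by auto
          qed
        next
          assume "p \<in> {(1,3),(2,4)}"
          then show "p \<in> E" using e13 e24 by auto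
        qed
      qed
      then show ?thesis using True by simp
    next
      case False
      then have "4 < h" using jh j4 by simp
      obtain x y where xy: "(x,y) \<in> E" "x \<le> 4" "4 < y" using irr[of 4] \<open>4 < h\<close> by auto
      have "1 \<le> x" using wf[OF xy(1)] by simp
      then consider "x = 1" | "x = 2" | "x = 3" | "x = 4" using xy by linarith
      then show ?thesis
      proof cases
        case 1 then show ?thesis using M3[OF e13, of y] xy by auto
      next
        case 2 then show ?thesis using M3[OF e24, of y] xy by auto
      next
        case 3 then show ?thesis using M5[OF e13, of y] xy by auto
      next
        case 4 then show ?thesis using M5[OF e24, of y] xy by auto
      qed
    qed
  qed
qed

lemma structural:
  assumes U3: "\<And>a b c a' b' c'. a < b \<Longrightarrow> b < c \<Longrightarrow> a' < b' \<Longrightarrow> b' < c'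
       \<Longrightarrow> irr3 E a b c \<Longrightarrow> irr3 E a' b' c' \<Longrightarrow> tp3 E a b c = tp3 E a' b' c'"
    and U4: "\<And>a b c d a' b' c' d'. a < b \<Longrightarrow> b < c \<Longrightarrow> c < d \<Longrightarrow> a' < b' \<Longrightarrow> b' < c' \<Longrightarrow> c' < d'
       \<Longrightarrow> irr4 E a b c d \<Longrightarrow> irr4 E a' b' c' d' \<Longrightarrow> tp4 E a b c d = tp4 E a' b' c' d'"
    and h1: "1 \<le> h"
  shows "(h, E) \<in> Jfam"
proof -
  have inJ: "J1 h \<in> Jfam" "J2 h \<in> Jfam" "J3 h \<in> Jfam" "J4 h \<in> Jfam" "Lg h \<in> Jfam" "Q1 \<in> Jfam" "Q2 \<in> Jfam"
    unfolding Jfam_def using h1 by auto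
  consider "h = 1" | "h = 2" | "3 \<le> h" using h1 by linarith
  then show ?thesis
  proof cases
    case 1
    then have "E = {}" using wf by fastforce
    then have "(h,E) = J1 h" unfolding J1_def using 1 by auto
    then show ?thesis using inJ by simp
  next
    case 2
    obtain i j where ij: "(i,j) \<in> E" "i \<le> 1" "1 < j" using irr[of 1] 2 by auto
    have "i = 1" "j = 2" using ij wf[OF ij(1)] 2 by auto
    then have "(1,2) \<in> E" using ij by simp
    have "E = {(i,j). 1 \<le> i \<and> i < j \<and> j \<le> h}"
    proof (rule set_eqI)
      fix p :: "nat \<times> nat"
      obtain x y where p: "p = (x,y)" by (cases p)
      show "p \<in> E \<longleftrightarrow> p \<in> {(i,j). 1 \<le> i \<and> i < j \<and> j \<le> h}"
      proof
        assume "p \<in> E" then show "p \<in> {(i,j). 1 \<le> i \<and> i < j \<and> j \<le> h}" using wf p by auto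
      next
        assume "p \<in> {(i,j). 1 \<le> i \<and> i < j \<and> j \<le> h}"
        then have "x = 1" "y = 2" using p 2 by auto
        then show "p \<in> E" using p \<open>(1,2) \<in> E\<close> by simp
      qed
    qed
    then have "(h,E) = J1 h" unfolding J1_def by auto
    then show ?thesis using inJ by simp
  next
    case 3
    obtain a0 b0 c0 where t0: "a0 < b0" "b0 < c0" "irr3 E a0 b0 c0"
    proof -
      obtain i j where ij: "(i,j) \<in> E" "i \<le> 1" "1 < j" using irr[of 1] 3 by auto
      have i1: "i = 1" using ij wf[OF ij(1)] by simp
      show ?thesis
      proof (cases "j = 2")
        case False
        then show ?thesis using that[of 1 2 j] ij i1 unfolding irr3_def by auto
      next
        case True
        obtain i' j' where ij': "(i',j') \<in> E" "i' \<le> 2" "2 < j'" using irr[of 2] 3 by auto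
        have "i' = 1 \<or> i' = 2" using ij' wf[OF ij'(1)] by auto
        then show ?thesis using that[of 1 2 j'] ij ij' i1 True unfolding irr3_def by auto
      qed
    qed
    define T where "T = tp3 E a0 b0 c0"
    have UT: "tp3 E a b c = T" if "a < b" "b < c" "irr3 E a b c" for a b c
      using U3[OF that(1,2) t0(1,2) that(3) t0(3)] T_def by simp
    obtain p q r where T: "T = (p,q,r)" by (cases T) auto
    have Tc: "(p \<or> q) \<and> (q \<or> r)" using t0(3) T T_def unfolding irr3_def tp3_def by auto
    consider "q \<and> p \<and> r" | "\<not> q" | "q \<and> p \<and> \<not> r" | "q \<and> \<not> p \<and> r" | "q \<and> \<not> p \<and> \<not> r" by blast
    then show ?thesis
    proof cases
      case 1
      have "E = {(i,j). 1 \<le> i \<and> i < j \<and> j \<le> h}"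
        by (rule caseK3) (use UT T 1 in \<open>auto simp: tp3_def\<close>)
      then have "(h,E) = J1 h" unfolding J1_def by auto
      then show ?thesis using inJ by simp
    next
      case 2
      have "E = {(i,i+1) | i. 1 \<le> i \<and> i + 1 \<le> h}"
        by (rule caseL3) (use UT T 2 in \<open>auto simp: tp3_def\<close>)
      then have "(h,E) = Lg h" unfolding Lg_def by auto
      then show ?thesis using inJ by simp
    next
      case 3
      have "E = {(1,i) | i. 2 \<le> i \<and> i \<le> h}"
        by (rule caseJ3) (use UT T 3 in \<open>auto simp: tp3_def\<close>)
      then have "(h,E) = J3 h" unfolding J3_def by auto
      then show ?thesis using inJ by simp
    next
      case 4
      have "E = {(i,h) | i. 1 \<le> i \<and> i \<le> h - 1}"
        by (rule caseJ4) (use UT T 4 in \<open>auto simp: tp3_def\<close>)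
      then have "(h,E) = J4 h" unfolding J4_def by auto
      then show ?thesis using inJ by simp
    next
      case 5
      have "E = {(1,h)} \<or> (h = 4 \<and> E = {(1,3),(2,4)}) \<or> (h = 4 \<and> E = {(1,4),(2,3)})"
      proof (rule caseJ2)
        show "\<And>a b c. a < b \<Longrightarrow> b < c \<Longrightarrow> irr3 E a b c \<Longrightarrow> (a,b) \<notin> E \<and> (b,c) \<notin> E"
          using UT T 5 by (auto simp: tp3_def)
      qed (use U4 3 in blast)+
      moreover have "J2 h = (h, {(1,h)})" unfolding J2_def using 3 by auto
      ultimately show ?thesis using inJ unfolding Q1_def Q2_def by auto
    qed
  qed
qed

end

lemma ord_osum[simp]: "ord_of (osum A B) = ord_of A + ord_of B"
  by (simp add: osum_def ord_of_def)
lemma edges_osum: "edges (osum A B) = edges A \<union> {(i + ord_of A, j + ord_of A) | i j. (i,j) \<in> edges B}"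
  by (simp add: osum_def edges_def ord_of_def)
lemma osum_list_Nil[simp]: "osum_list [] = (0, {})" by (simp add: osum_list_def)
lemma osum_list_Cons[simp]: "osum_list (A # Gs) = osum A (osum_list Gs)" by (simp add: osum_list_def)
lemma ord_induced[simp]: "ord_of (induced G S) = card S" by (simp add: induced_def ord_of_def)
lemma edges_induced: "edges (induced G S) = {(rank_in S x, rank_in S y) | x y. x \<in> S \<and> y \<in> S \<and> (x,y) \<in> edges G}"
  by (simp add: induced_def edges_def)
lemma og_eq: "G = (ord_of G, edges G)" by (simp add: ord_of_def edges_def)
lemma og_eqI: "ord_of G = ord_of H \<Longrightarrow> edges G = edges H \<Longrightarrow> G = H"
  by (simp add: ord_of_def edges_def prod_eq_iff)

lemma is_ograph_osum:
  assumes "is_ograph A" "is_ograph B" shows "is_ograph (osum A B)"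
  using assms unfolding is_ograph_def by (auto simp: edges_osum)

lemma is_ograph_osum_list:
  "\<forall>H\<in>set Gs. is_ograph H \<Longrightarrow> is_ograph (osum_list Gs)"
proof (induction Gs)
  case Nil
  show ?case by (simp add: is_ograph_def edges_def)
next
  case (Cons A Gs)
  then show ?case using is_ograph_osum by simp
qed

lemma rank_ge1: "finite S \<Longrightarrow> x \<in> S \<Longrightarrow> 1 \<le> rank_in S x"
proof -
  assume a: "finite S" "x \<in> S"
  have "finite {y \<in> S. y \<le> x}" using a by simp
  moreover have "x \<in> {y \<in> S. y \<le> x}" using a by simp
  ultimately have "card {y \<in> S. y \<le> x} > 0" using card_gt_0_iff by blast
  then show ?thesis unfolding rank_in_def by simp
qed

lemma rank_le: "finite S \<Longrightarrow> rank_in S x \<le> card S"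
  unfolding rank_in_def by (intro card_mono) auto

lemma rank_less: assumes "finite S" "x \<in> S" "y \<in> S" "x < y" shows "rank_in S x < rank_in S y"
  unfolding rank_in_def
proof (rule psubset_card_mono)
  show "finite {z \<in> S. z \<le> y}" using assms by simp
  have "y \<in> {z \<in> S. z \<le> y}" "y \<notin> {z \<in> S. z \<le> x}" using assms by auto
  moreover have "{z \<in> S. z \<le> x} \<subseteq> {z \<in> S. z \<le> y}" using assms by auto
  ultimately show "{z \<in> S. z \<le> x} \<subset> {z \<in> S. z \<le> y}" by blast
qed

lemma is_ograph_induced:
  assumes "is_ograph G" "finite S" shows "is_ograph (induced G S)"
  unfolding is_ograph_def edges_induced ord_induced
proof clarify
  fix x y assume xy: "x \<in> S" "y \<in> S" "(x,y) \<in> edges G"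
  then have "x < y" using assms(1) unfolding is_ograph_def by auto
  then show "1 \<le> rank_in S x \<and> rank_in S x < rank_in S y \<and> rank_in S y \<le> card S"
    using rank_ge1[OF assms(2) xy(1)] rank_less[OF assms(2) xy(1,2)] rank_le[OF assms(2), of y] by simp
qed

lemma induced_empty: "induced G {} = (0, {})"
  by (simp add: induced_def)
lemma osum_empty: "osum (0, {}) Y = Y"
  by (simp add: osum_def ord_of_def edges_def)

lemma induced_osum:
  assumes oA: "is_ograph A" and oB: "is_ograph B"
    and S: "S \<subseteq> {1..ord_of A}" and R: "R \<subseteq> {1..ord_of B}"
  shows "induced (osum A B) (S \<union> (\<lambda>x. x + ord_of A) ` R) = osum (induced A S) (induced B R)"
proof -
  define a where "a = ord_of A"
  define R' where "R' = (\<lambda>x. x + a) ` R"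
  define U where "U = S \<union> R'"
  have fS: "finite S" using S finite_subset by blast
  have fR: "finite R" using R finite_subset by blast
  have Sle: "\<forall>y\<in>S. 1 \<le> y \<and> y \<le> a" using S unfolding a_def by auto
  have Rge: "\<forall>y\<in>R. 1 \<le> y \<and> y \<le> ord_of B" using R by auto
  have disj: "S \<inter> R' = {}" using Sle Rge unfolding R'_def by force
  have cardU: "card U = card S + card R"
    unfolding U_def using card_Un_disjoint[of S R'] disj fS fR card_image[of "\<lambda>x. x + a" R]
    unfolding R'_def by (simp add: inj_on_def)
  have rS: "rank_in U x = rank_in S x" if "x \<in> S" for x
  proof -
    have "{y \<in> U. y \<le> x} = {y \<in> S. y \<le> x}" using that Sle Rge unfolding U_def R'_def by force
    then show ?thesis unfolding rank_in_def by simp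
  qed
  have rR: "rank_in U (r + a) = card S + rank_in R r" if "r \<in> R" for r
  proof -
    have "{y \<in> U. y \<le> r + a} = S \<union> (\<lambda>x. x + a) ` {y \<in> R. y \<le> r}"
      using that Sle Rge unfolding U_def R'_def by force
    moreover have "card (S \<union> (\<lambda>x. x + a) ` {y \<in> R. y \<le> r}) = card S + card {y \<in> R. y \<le> r}"
    proof -
      have "S \<inter> (\<lambda>x. x + a) ` {y \<in> R. y \<le> r} = {}" using Sle Rge by force
      moreover have "card ((\<lambda>x. x + a) ` {y \<in> R. y \<le> r}) = card {y \<in> R. y \<le> r}"
        by (rule card_image) (simp add: inj_on_def)
      ultimately show ?thesis using fS fR by (simp add: card_Un_disjoint)
    qed
    ultimately show ?thesis unfolding rank_in_def by simp
  qed
  have eA: "1 \<le> i \<and> i < j \<and> j \<le> a" if "(i,j) \<in> edges A" for i j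
    using oA that unfolding is_ograph_def a_def by auto
  have eB: "1 \<le> i \<and> i < j \<and> j \<le> ord_of B" if "(i,j) \<in> edges B" for i j
    using oB that unfolding is_ograph_def by auto
  have edges_eq: "edges (induced (osum A B) U) = edges (osum (induced A S) (induced B R))"
  proof (rule set_eqI)
    fix p :: "nat \<times> nat"
    show "p \<in> edges (induced (osum A B) U) \<longleftrightarrow> p \<in> edges (osum (induced A S) (induced B R))"
    proof
      assume "p \<in> edges (induced (osum A B) U)"
      then obtain x y where p: "p = (rank_in U x, rank_in U y)" and xy: "x \<in> U" "y \<in> U"
        and e: "(x,y) \<in> edges (osum A B)" unfolding edges_induced by blast
      from e consider "(x,y) \<in> edges A" | i j where "(i,j) \<in> edges B" "x = i + a" "y = j + a"
        unfolding edges_osum a_def by blast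
      then show "p \<in> edges (osum (induced A S) (induced B R))"
      proof cases
        case 1
        then have "x \<in> S" "y \<in> S" using eA[OF 1] xy Rge unfolding U_def R'_def by force+
        then show ?thesis using p rS 1 unfolding edges_osum edges_induced by blast
      next
        case 2
        then have "x \<notin> S" "y \<notin> S" using eB[OF 2(1)] S unfolding a_def by auto
        then have "x \<in> R'" "y \<in> R'" using xy unfolding U_def by auto
        then have "i \<in> R" "j \<in> R" using 2 unfolding R'_def by auto
        then have "p = (rank_in R i + card S, rank_in R j + card S)" using p rR 2 by simp
        then show ?thesis using \<open>i \<in> R\<close> \<open>j \<in> R\<close> 2(1) unfolding edges_osum edges_induced ord_induced by blast
      qed
    next
      assume "p \<in> edges (osum (induced A S) (induced B R))"
      then consider x y where "p = (rank_in S x, rank_in S y)" "x \<in> S" "y \<in> S" "(x,y) \<in> edges A"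
        | i j where "p = (rank_in R i + card S, rank_in R j + card S)" "i \<in> R" "j \<in> R" "(i,j) \<in> edges B"
        unfolding edges_osum edges_induced ord_induced by blast
      then show "p \<in> edges (induced (osum A B) U)"
      proof cases
        case 1
        then have "p = (rank_in U x, rank_in U y)" using rS by simp
        moreover have "x \<in> U" "y \<in> U" using 1 unfolding U_def by auto
        moreover have "(x,y) \<in> edges (osum A B)" using 1 unfolding edges_osum by auto
        ultimately show ?thesis unfolding edges_induced by blast
      next
        case 2
        then have "p = (rank_in U (i + a), rank_in U (j + a))" using rR by simp
        moreover have "i + a \<in> U" "j + a \<in> U" using 2 unfolding U_def R'_def by auto
        moreover have "(i + a, j + a) \<in> edges (osum A B)" using 2 unfolding edges_osum a_def by auto
        ultimately show ?thesis unfolding edges_induced by blast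
      qed
    qed
  qed
  show ?thesis
    apply (rule og_eqI)
    using cardU edges_eq unfolding U_def R'_def a_def by simp_all
qed

lemma osum_inj:
  assumes oP: "is_ograph P" and oP': "is_ograph P'" and oY: "is_ograph Y" and oY': "is_ograph Y'"
    and iP: "irreducible_og P" and iP': "irreducible_og P'"
    and p1: "1 \<le> ord_of P" and p1': "1 \<le> ord_of P'"
    and eq: "osum P Y = osum P' Y'"
  shows "P = P' \<and> Y = Y'"
proof -
  have gap: "\<not> (i \<le> ord_of Q \<and> ord_of Q < j)" if "is_ograph Q" "is_ograph Z" "(i,j) \<in> edges (osum Q Z)" for Q Z i j
    using that unfolding edges_osum is_ograph_def by auto
  have ord_le: "\<not> ord_of Q < ord_of Q'" if q: "is_ograph Q" "is_ograph Z" "irreducible_og Q'" "1 \<le> ord_of Q"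
     "osum Q Z = osum Q' Z'" for Q Z Q' Z'
  proof
    assume lt: "ord_of Q < ord_of Q'"
    obtain i j where ij: "(i,j) \<in> edges Q'" "i \<le> ord_of Q" "ord_of Q < j"
      using q(3) lt q(4) unfolding irred_char by blast
    then have "(i,j) \<in> edges (osum Q' Z')" unfolding edges_osum by auto
    then have "(i,j) \<in> edges (osum Q Z)" using q(5) by simp
    then show False using gap[OF q(1,2)] ij by blast
  qed
  have oeq: "ord_of P = ord_of P'"
    using ord_le[OF oP oY iP' p1 eq] ord_le[OF oP' oY' iP p1' eq[symmetric]] by linarith
  define p where "p = ord_of P"
  have eP: "edges Q = {(i,j) \<in> edges (osum Q Z). j \<le> ord_of Q}" if "is_ograph Q" "is_ograph Z" for Q Z
    using that unfolding edges_osum is_ograph_def by auto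
  have PP: "P = P'"
    apply (rule og_eqI)
    using oeq eP[OF oP oY] eP[OF oP' oY'] eq by simp_all
  have eY: "edges Z = {(i,j). 1 \<le> i \<and> (i + ord_of Q, j + ord_of Q) \<in> edges (osum Q Z)}" if "is_ograph Q" "is_ograph Z" for Q Z
    using that unfolding edges_osum is_ograph_def by auto
  have "ord_of Y = ord_of Y'"
    using eq oeq by (metis add_left_imp_eq ord_osum)
  moreover have "edges Y = edges Y'"
    using eY[OF oP oY] eY[OF oP' oY'] eq PP by simp
  ultimately show ?thesis using PP og_eqI by blast
qed

lemma rank_mem: "x \<in> S \<Longrightarrow> y \<in> S \<Longrightarrow> (x,y) \<in> edges A \<Longrightarrow>
  (rank_in S x, rank_in S y) \<in> {(rank_in S x, rank_in S y) | x y. x \<in> S \<and> y \<in> S \<and> (x,y) \<in> edges A}"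
  by blast

lemma rank4:
  assumes "a < b" "b < c" "c < d"
  shows "rank_in {a,b,c,d} a = 1" "rank_in {a,b,c,d} b = 2" "rank_in {a,b,c,d} c = 3" "rank_in {a,b,c,d} d = 4"
proof -
  have "{y \<in> {a,b,c,d}. y \<le> a} = {a}" using assms by auto
  then show "rank_in {a,b,c,d} a = 1" by (simp add: rank_in_def)
  have "{y \<in> {a,b,c,d}. y \<le> b} = {a,b}" using assms by auto
  then show "rank_in {a,b,c,d} b = 2" using assms by (simp add: rank_in_def)
  have "{y \<in> {a,b,c,d}. y \<le> c} = {a,b,c}" using assms by auto
  then show "rank_in {a,b,c,d} c = 3" using assms by (simp add: rank_in_def)
  have "{y \<in> {a,b,c,d}. y \<le> d} = {a,b,c,d}" using assms by auto
  then show "rank_in {a,b,c,d} d = 4" using assms by (simp add: rank_in_def)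
qed

lemma ind4:
  assumes "a < b" "b < c" "c < d" and og: "\<forall>x y. (x,y) \<in> edges A \<longrightarrow> x < y"
  shows "induced A {a,b,c,d} = (4, {p. (p = (1,2) \<and> (a,b) \<in> edges A) \<or> (p = (1,3) \<and> (a,c) \<in> edges A)
     \<or> (p = (1,4) \<and> (a,d) \<in> edges A) \<or> (p = (2,3) \<and> (b,c) \<in> edges A)
     \<or> (p = (2,4) \<and> (b,d) \<in> edges A) \<or> (p = (3,4) \<and> (c,d) \<in> edges A)})"
proof -
  have c: "card {a,b,c,d} = 4" using assms by auto
  have r: "rank_in {a,b,c,d} a = 1" "rank_in {a,b,c,d} b = 2" "rank_in {a,b,c,d} c = 3" "rank_in {a,b,c,d} d = 4"
    using rank4 assms by auto
  have "{(rank_in {a,b,c,d} x, rank_in {a,b,c,d} y) | x y. x \<in> {a,b,c,d} \<and> y \<in> {a,b,c,d} \<and> (x,y) \<in> edges A}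
     = {p. (p = (1,2) \<and> (a,b) \<in> edges A) \<or> (p = (1,3) \<and> (a,c) \<in> edges A)
     \<or> (p = (1,4) \<and> (a,d) \<in> edges A) \<or> (p = (2,3) \<and> (b,c) \<in> edges A)
     \<or> (p = (2,4) \<and> (b,d) \<in> edges A) \<or> (p = (3,4) \<and> (c,d) \<in> edges A)}"
  proof (rule set_eqI, rule iffI)
    fix p :: "nat \<times> nat" assume "p \<in> {(rank_in {a,b,c,d} x, rank_in {a,b,c,d} y) | x y. x \<in> {a,b,c,d} \<and> y \<in> {a,b,c,d} \<and> (x,y) \<in> edges A}"
    then obtain x y where p: "p = (rank_in {a,b,c,d} x, rank_in {a,b,c,d} y)" and xy: "x \<in> {a,b,c,d}" "y \<in> {a,b,c,d}" and e: "(x,y) \<in> edges A" by blast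
    have "x < y" using og e by blast
    moreover have "x = a \<or> x = b \<or> x = c \<or> x = d" using xy by simp
    moreover have "y = a \<or> y = b \<or> y = c \<or> y = d" using xy by simp
    ultimately have "(x,y) = (a,b) \<or> (x,y) = (a,c) \<or> (x,y) = (a,d) \<or> (x,y) = (b,c) \<or> (x,y) = (b,d) \<or> (x,y) = (c,d)"
      using assms(1,2,3) by (elim disjE) simp_all
    then show "p \<in> {p. (p = (1,2) \<and> (a,b) \<in> edges A) \<or> (p = (1,3) \<and> (a,c) \<in> edges A)
     \<or> (p = (1,4) \<and> (a,d) \<in> edges A) \<or> (p = (2,3) \<and> (b,c) \<in> edges A)
     \<or> (p = (2,4) \<and> (b,d) \<in> edges A) \<or> (p = (3,4) \<and> (c,d) \<in> edges A)}"
      using r p e by (elim disjE) simp_all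
  next
    fix p :: "nat \<times> nat" assume "p \<in> {p. (p = (1,2) \<and> (a,b) \<in> edges A) \<or> (p = (1,3) \<and> (a,c) \<in> edges A)
     \<or> (p = (1,4) \<and> (a,d) \<in> edges A) \<or> (p = (2,3) \<and> (b,c) \<in> edges A)
     \<or> (p = (2,4) \<and> (b,d) \<in> edges A) \<or> (p = (3,4) \<and> (c,d) \<in> edges A)}"
    then consider "p = (1,2)" "(a,b) \<in> edges A" | "p = (1,3)" "(a,c) \<in> edges A" | "p = (1,4)" "(a,d) \<in> edges A"
      | "p = (2,3)" "(b,c) \<in> edges A" | "p = (2,4)" "(b,d) \<in> edges A" | "p = (3,4)" "(c,d) \<in> edges A" by blast
    then show "p \<in> {(rank_in {a,b,c,d} x, rank_in {a,b,c,d} y) | x y. x \<in> {a,b,c,d} \<and> y \<in> {a,b,c,d} \<and> (x,y) \<in> edges A}"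
    proof cases
      case 1 then show ?thesis using rank_mem[of a "{a,b,c,d}" b A] r by simp
    next
      case 2 then show ?thesis using rank_mem[of a "{a,b,c,d}" c A] r by simp
    next
      case 3 then show ?thesis using rank_mem[of a "{a,b,c,d}" d A] r by simp
    next
      case 4 then show ?thesis using rank_mem[of b "{a,b,c,d}" c A] r by simp
    next
      case 5 then show ?thesis using rank_mem[of b "{a,b,c,d}" d A] r by simp
    next
      case 6 then show ?thesis using rank_mem[of c "{a,b,c,d}" d A] r by simp
    qed
  qed
  then show ?thesis unfolding induced_def using c by simp
qed

lemma ind2:
  assumes "a < b" and og: "\<forall>x y. (x,y) \<in> edges A \<longrightarrow> x < y"
  shows "induced A {a,b} = (2, {p. p = (1,2) \<and> (a,b) \<in> edges A})"
proof -
  have c: "card {a,b} = 2" using assms by auto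
  have r1: "rank_in {a,b} a = 1"
  proof -
    have "{y \<in> {a,b}. y \<le> a} = {a}" using assms by auto
    then show ?thesis by (simp add: rank_in_def)
  qed
  have r2: "rank_in {a,b} b = 2"
  proof -
    have "{y \<in> {a,b}. y \<le> b} = {a,b}" using assms by auto
    then show ?thesis using assms by (simp add: rank_in_def)
  qed
  have "{(rank_in {a,b} x, rank_in {a,b} y) | x y. x \<in> {a,b} \<and> y \<in> {a,b} \<and> (x,y) \<in> edges A}
     = {p. p = (1,2) \<and> (a,b) \<in> edges A}"
  proof (rule set_eqI, rule iffI)
    fix p :: "nat \<times> nat" assume "p \<in> {(rank_in {a,b} x, rank_in {a,b} y) | x y. x \<in> {a,b} \<and> y \<in> {a,b} \<and> (x,y) \<in> edges A}"
    then obtain x y where p: "p = (rank_in {a,b} x, rank_in {a,b} y)" and xy: "x \<in> {a,b}" "y \<in> {a,b}" and e: "(x,y) \<in> edges A" by blast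
    have "x < y" using og e by blast
    then have "(x,y) = (a,b)" using xy assms(1) by auto
    then show "p \<in> {p. p = (1,2) \<and> (a,b) \<in> edges A}" using r1 r2 p e by auto
  next
    fix p :: "nat \<times> nat" assume "p \<in> {p. p = (1,2) \<and> (a,b) \<in> edges A}"
    then show "p \<in> {(rank_in {a,b} x, rank_in {a,b} y) | x y. x \<in> {a,b} \<and> y \<in> {a,b} \<and> (x,y) \<in> edges A}"
      using r1 r2 rank_mem[of a "{a,b}" b A] by simp
  qed
  then show ?thesis unfolding induced_def using c by simp
qed

lemma u3: "(\<forall>u::nat. 1 \<le> u \<and> u < 3 \<longrightarrow> P u) \<longleftrightarrow> P 1 \<and> P 2"
proof
  assume "P 1 \<and> P 2"
  then show "\<forall>u::nat. 1 \<le> u \<and> u < 3 \<longrightarrow> P u"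
    by (metis One_nat_def Suc_1 le_neq_implies_less less_Suc_eq not_less_eq numeral_3_eq_3)
qed auto

lemma u4: "(\<forall>u::nat. 1 \<le> u \<and> u < 4 \<longrightarrow> P u) \<longleftrightarrow> P 1 \<and> P 2 \<and> P 3"
proof
  assume a: "P 1 \<and> P 2 \<and> P 3"
  show "\<forall>u::nat. 1 \<le> u \<and> u < 4 \<longrightarrow> P u"
  proof (intro allI impI)
    fix u :: nat assume "1 \<le> u \<and> u < 4"
    then have "u = 1 \<or> u = 2 \<or> u = 3" by linarith
    then show "P u" using a by auto
  qed
qed auto

lemma bex_pair: "(\<exists>(i,j)\<in>X. P i j) \<longleftrightarrow> (\<exists>p. p \<in> X \<and> P (fst p) (snd p))" by auto

lemma irr3_iff:
  assumes "a < b" "b < c" and og: "\<forall>x y. (x,y) \<in> edges A \<longrightarrow> x < y"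
  shows "irreducible_og (induced A {a,b,c}) \<longleftrightarrow> irr3 (edges A) a b c"
proof -
  define X where "X = {p. (p = (1::nat,2::nat) \<and> (a,b) \<in> edges A) \<or> (p = (1,3) \<and> (a,c) \<in> edges A) \<or> (p = (2,3) \<and> (b,c) \<in> edges A)}"
  have G: "induced A {a,b,c} = (3, X)" using ind3[OF assms] unfolding X_def by simp
  have "irreducible_og (3, X) \<longleftrightarrow> (\<forall>u::nat. 1 \<le> u \<and> u < 3 \<longrightarrow> (\<exists>(i,j)\<in>X. i \<le> u \<and> u < j))"
    unfolding irred_char by (simp add: ord_of_def edges_def)
  also have "\<dots> \<longleftrightarrow> (\<exists>(i,j)\<in>X. i \<le> 1 \<and> 1 < j) \<and> (\<exists>(i,j)\<in>X. i \<le> 2 \<and> 2 < j)"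
    by (rule u3)
  also have "\<dots> \<longleftrightarrow> irr3 (edges A) a b c"
    unfolding X_def irr3_def bex_pair by (simp add: conj_disj_distribR ex_disj_distrib)
  finally show ?thesis using G by simp
qed

lemma irr4_iff:
  assumes "a < b" "b < c" "c < d" and og: "\<forall>x y. (x,y) \<in> edges A \<longrightarrow> x < y"
  shows "irreducible_og (induced A {a,b,c,d}) \<longleftrightarrow> irr4 (edges A) a b c d"
proof -
  define X where "X = {p. (p = (1::nat,2::nat) \<and> (a,b) \<in> edges A) \<or> (p = (1,3) \<and> (a,c) \<in> edges A)
     \<or> (p = (1,4) \<and> (a,d) \<in> edges A) \<or> (p = (2,3) \<and> (b,c) \<in> edges A)
     \<or> (p = (2,4) \<and> (b,d) \<in> edges A) \<or> (p = (3,4) \<and> (c,d) \<in> edges A)}"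
  have G: "induced A {a,b,c,d} = (4, X)" using ind4[OF assms] unfolding X_def by simp
  have "irreducible_og (4, X) \<longleftrightarrow> (\<forall>u::nat. 1 \<le> u \<and> u < 4 \<longrightarrow> (\<exists>(i,j)\<in>X. i \<le> u \<and> u < j))"
    unfolding irred_char by (simp add: ord_of_def edges_def)
  also have "\<dots> \<longleftrightarrow> (\<exists>(i,j)\<in>X. i \<le> 1 \<and> 1 < j) \<and> (\<exists>(i,j)\<in>X. i \<le> 2 \<and> 2 < j) \<and> (\<exists>(i,j)\<in>X. i \<le> 3 \<and> 3 < j)"
    by (rule u4)
  also have "\<dots> \<longleftrightarrow> irr4 (edges A) a b c d"
    unfolding X_def irr4_def bex_pair by (simp add: conj_disj_distribR ex_disj_distrib)
  finally show ?thesis using G by simp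
qed

lemma tp3_eq:
  assumes "a < b" "b < c" "a' < b'" "b' < c'" and og: "\<forall>x y. (x,y) \<in> edges A \<longrightarrow> x < y"
    and eq: "induced A {a,b,c} = induced A {a',b',c'}"
  shows "tp3 (edges A) a b c = tp3 (edges A) a' b' c'"
proof -
  define X where "X = {p. (p = (1::nat,2::nat) \<and> (a,b) \<in> edges A) \<or> (p = (1,3) \<and> (a,c) \<in> edges A) \<or> (p = (2,3) \<and> (b,c) \<in> edges A)}"
  define Y where "Y = {p. (p = (1::nat,2::nat) \<and> (a',b') \<in> edges A) \<or> (p = (1,3) \<and> (a',c') \<in> edges A) \<or> (p = (2,3) \<and> (b',c') \<in> edges A)}"
  have "X = Y" using eq ind3[OF assms(1,2) og] ind3[OF assms(3,4) og] unfolding X_def Y_def by simp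
  then have "(1,2) \<in> X \<longleftrightarrow> (1,2) \<in> Y" "(1,3) \<in> X \<longleftrightarrow> (1,3) \<in> Y" "(2,3) \<in> X \<longleftrightarrow> (2,3) \<in> Y" by simp_all
  then show ?thesis unfolding tp3_def X_def Y_def by simp
qed

lemma tp4_eq:
  assumes "a < b" "b < c" "c < d" "a' < b'" "b' < c'" "c' < d'" and og: "\<forall>x y. (x,y) \<in> edges A \<longrightarrow> x < y"
    and eq: "induced A {a,b,c,d} = induced A {a',b',c',d'}"
  shows "tp4 (edges A) a b c d = tp4 (edges A) a' b' c' d'"
proof -
  define X where "X = {p. (p = (1::nat,2::nat) \<and> (a,b) \<in> edges A) \<or> (p = (1,3) \<and> (a,c) \<in> edges A)
     \<or> (p = (1,4) \<and> (a,d) \<in> edges A) \<or> (p = (2,3) \<and> (b,c) \<in> edges A)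
     \<or> (p = (2,4) \<and> (b,d) \<in> edges A) \<or> (p = (3,4) \<and> (c,d) \<in> edges A)}"
  define Y where "Y = {p. (p = (1::nat,2::nat) \<and> (a',b') \<in> edges A) \<or> (p = (1,3) \<and> (a',c') \<in> edges A)
     \<or> (p = (1,4) \<and> (a',d') \<in> edges A) \<or> (p = (2,3) \<and> (b',c') \<in> edges A)
     \<or> (p = (2,4) \<and> (b',d') \<in> edges A) \<or> (p = (3,4) \<and> (c',d') \<in> edges A)}"
  have "X = Y" using eq ind4[OF assms(1,2,3) og] ind4[OF assms(4,5,6) og] unfolding X_def Y_def by simp
  then have "(1,2) \<in> X \<longleftrightarrow> (1,2) \<in> Y" "(1,3) \<in> X \<longleftrightarrow> (1,3) \<in> Y" "(1,4) \<in> X \<longleftrightarrow> (1,4) \<in> Y"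
     "(2,3) \<in> X \<longleftrightarrow> (2,3) \<in> Y" "(2,4) \<in> X \<longleftrightarrow> (2,4) \<in> Y" "(3,4) \<in> X \<longleftrightarrow> (3,4) \<in> Y" by simp_all
  then show ?thesis unfolding tp4_def X_def Y_def by simp
qed

lemma (in sg) exists_irr3:
  assumes "3 \<le> h"
  obtains a0 b0 c0 where "a0 < b0" "b0 < c0" "irr3 E a0 b0 c0"
proof -
  obtain i j where ij: "(i,j) \<in> E" "i \<le> 1" "1 < j" using irr[of 1] assms by auto
  have i1: "i = 1" using ij wf[OF ij(1)] by simp
  show ?thesis
  proof (cases "j = 2")
    case False
    then show ?thesis using that[of 1 2 j] ij i1 unfolding irr3_def by auto
  next
    case True
    obtain i' j' where ij': "(i',j') \<in> E" "i' \<le> 2" "2 < j'" using irr[of 2] assms by auto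
    have "i' = 1 \<or> i' = 2" using ij' wf[OF ij'(1)] by auto
    then show ?thesis using that[of 1 2 j'] ij ij' i1 True unfolding irr3_def by auto
  qed
qed

definition U3 :: "(nat \<times> nat) set \<Rightarrow> bool" where
  "U3 E \<longleftrightarrow> (\<forall>a b c a' b' c'. a < b \<longrightarrow> b < c \<longrightarrow> a' < b' \<longrightarrow> b' < c'
       \<longrightarrow> irr3 E a b c \<longrightarrow> irr3 E a' b' c' \<longrightarrow> tp3 E a b c = tp3 E a' b' c')"
definition U4 :: "(nat \<times> nat) set \<Rightarrow> bool" where
  "U4 E \<longleftrightarrow> (\<forall>a b c d a' b' c' d'. a < b \<longrightarrow> b < c \<longrightarrow> c < d \<longrightarrow> a' < b' \<longrightarrow> b' < c' \<longrightarrow> c' < d'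
       \<longrightarrow> irr4 E a b c d \<longrightarrow> irr4 E a' b' c' d' \<longrightarrow> tp4 E a b c d = tp4 E a' b' c' d')"

lemma (in sg) structural':
  assumes "U3 E" "U4 E" "1 \<le> h" shows "(h, E) \<in> Jfam"
proof (rule structural)
  show "\<And>a b c a' b' c'. a < b \<Longrightarrow> b < c \<Longrightarrow> a' < b' \<Longrightarrow> b' < c'
       \<Longrightarrow> irr3 E a b c \<Longrightarrow> irr3 E a' b' c' \<Longrightarrow> tp3 E a b c = tp3 E a' b' c'"
    using assms(1)[unfolded U3_def, rule_format] .
  show "\<And>a b c d a' b' c' d'. a < b \<Longrightarrow> b < c \<Longrightarrow> c < d \<Longrightarrow> a' < b' \<Longrightarrow> b' < c' \<Longrightarrow> c' < d'
       \<Longrightarrow> irr4 E a b c d \<Longrightarrow> irr4 E a' b' c' d' \<Longrightarrow> tp4 E a b c d = tp4 E a' b' c' d'"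
    using assms(2)[unfolded U4_def, rule_format] .
qed (rule assms(3))

definition Pc :: "ograph \<Rightarrow> nat \<Rightarrow> ograph set" where
  "Pc A t = {induced A S | S. S \<subseteq> {1..ord_of A} \<and> card S = t \<and> irreducible_og (induced A S)}"

lemma finite_Pc: "finite (Pc A t)"
proof -
  have "Pc A t \<subseteq> (\<lambda>S. induced A S) ` Pow {1..ord_of A}" unfolding Pc_def by blast
  then show ?thesis by (rule finite_subset) simp
qed

lemma card_ge2: "finite X \<Longrightarrow> x \<in> X \<Longrightarrow> y \<in> X \<Longrightarrow> x \<noteq> y \<Longrightarrow> 2 \<le> card X"
proof -
  assume a: "finite X" "x \<in> X" "y \<in> X" "x \<noteq> y"
  have "card {x,y} = 2" using a by simp
  moreover have "card {x,y} \<le> card X" using a by (intro card_mono) auto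
  ultimately show ?thesis by simp
qed

lemma card_ge1: "finite X \<Longrightarrow> x \<in> X \<Longrightarrow> 1 \<le> card X"
proof -
  assume "finite X" "x \<in> X"
  then have "X \<noteq> {}" by blast
  then have "0 < card X" using \<open>finite X\<close> card_gt_0_iff by blast
  then show ?thesis by simp
qed

lemma pieces:
  assumes oA: "is_ograph A" and iA: "irreducible_og A" and h1: "1 \<le> ord_of A" and nJ: "A \<notin> Jfam"
  shows "1 \<le> card (Pc A 1) \<and> 1 \<le> card (Pc A 2) \<and>
     (2 \<le> card (Pc A 3) \<or> (1 \<le> card (Pc A 3) \<and> 2 \<le> card (Pc A 4)))"
proof -
  define E where "E = edges A"
  define h where "h = ord_of A"
  have wf: "\<And>i j. (i,j) \<in> E \<Longrightarrow> 1 \<le> i \<and> i < j \<and> j \<le> h"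
    using oA unfolding is_ograph_def E_def h_def by auto
  have og: "\<forall>x y. (x,y) \<in> edges A \<longrightarrow> x < y" using wf unfolding E_def by blast
  have irr: "\<And>u. 1 \<le> u \<Longrightarrow> u < h \<Longrightarrow> \<exists>i j. (i,j) \<in> E \<and> i \<le> u \<and> u < j"
    using iA unfolding irred_char E_def h_def by blast
  interpret sg E h using wf irr by unfold_locales auto
  have AE: "A = (h, E)" unfolding h_def E_def by (rule og_eq)
  have notU: "\<not> (U3 E \<and> U4 E)"
  proof
    assume "U3 E \<and> U4 E"
    then have "(h, E) \<in> Jfam" using structural' h1 h_def by blast
    then show False using nJ AE by simp
  qed
  have in3: "induced A {a,b,c} \<in> Pc A 3" if "a < b" "b < c" "irr3 E a b c" for a b c
  proof -
    have "1 \<le> a" "c \<le> h" using that(3) unfolding irr3_def by (auto dest: wf)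
    then have "{a,b,c} \<subseteq> {1..ord_of A}" using that h_def by auto
    moreover have "card {a,b,c} = 3" using that by auto
    moreover have "irreducible_og (induced A {a,b,c})" using irr3_iff[OF that(1,2) og] that E_def by simp
    ultimately show ?thesis unfolding Pc_def by blast
  qed
  have in4: "induced A {a,b,c,d} \<in> Pc A 4" if "a < b" "b < c" "c < d" "irr4 E a b c d" for a b c d
  proof -
    have "1 \<le> a" "d \<le> h" using that(4) unfolding irr4_def by (auto dest: wf)
    then have "{a,b,c,d} \<subseteq> {1..ord_of A}" using that h_def by auto
    moreover have "card {a,b,c,d} = 4" using that by auto
    moreover have "irreducible_og (induced A {a,b,c,d})" using irr4_iff[OF that(1,2,3) og] that E_def by simp
    ultimately show ?thesis unfolding Pc_def by blast
  qed
  have c1: "1 \<le> card (Pc A 1)"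
  proof -
    have "(1::nat) \<in> {1..ord_of A}" using h1 by simp
    moreover have "irreducible_og (induced A {1})"
    proof -
      have o1: "ord_of (induced A {1}) = 1" by simp
      show ?thesis unfolding irred_char o1 by simp
    qed
    ultimately have "induced A {1} \<in> Pc A 1" unfolding Pc_def
      by (intro CollectI exI[of _ "{1::nat}"]) simp
    then show ?thesis using card_ge1[OF finite_Pc] by blast
  qed
  have h3: "3 \<le> h"
  proof (rule ccontr)
    assume "\<not> 3 \<le> h"
    then have "h \<le> 2" by simp
    have "U3 E" unfolding U3_def
    proof (intro allI impI)
      fix a b c a' b' c' assume "a < b" "b < c" "irr3 E a b c"
      then have "1 \<le> a" "c \<le> h" unfolding irr3_def by (auto dest: wf)
      then show "tp3 E a b c = tp3 E a' b' c'" using \<open>h \<le> 2\<close> \<open>a < b\<close> \<open>b < c\<close> by linarith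
    qed
    moreover have "U4 E" unfolding U4_def
    proof (intro allI impI)
      fix a b c d a' b' c' d' assume "a < b" "b < c" "c < d" "irr4 E a b c d"
      then have "1 \<le> a" "d \<le> h" unfolding irr4_def by (auto dest: wf)
      then show "tp4 E a b c d = tp4 E a' b' c' d'" using \<open>h \<le> 2\<close> \<open>a < b\<close> \<open>b < c\<close> \<open>c < d\<close> by linarith
    qed
    ultimately show False using notU by blast
  qed
  have c2: "1 \<le> card (Pc A 2)"
  proof -
    obtain i j where ij: "(i,j) \<in> E" "i \<le> 1" "1 < j" using irr[of 1] h3 by auto
    have w: "1 \<le> i" "i < j" "j \<le> h" using wf[OF ij(1)] by auto
    have G: "induced A {i,j} = (2, {p. p = (1,2) \<and> (i,j) \<in> edges A})" by (rule ind2[OF w(2) og])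
    have "irreducible_og (induced A {i,j})" unfolding irred_char G
      using ij(1) E_def by (auto simp: ord_of_def edges_def)
    moreover have "{i,j} \<subseteq> {1..ord_of A}" "card {i,j} = 2" using w h_def by auto
    ultimately have "induced A {i,j} \<in> Pc A 2" unfolding Pc_def by blast
    then show ?thesis using card_ge1[OF finite_Pc] by blast
  qed
  obtain a0 b0 c0 where t0: "a0 < b0" "b0 < c0" "irr3 E a0 b0 c0" using exists_irr3[OF h3] by blast
  have c3: "1 \<le> card (Pc A 3)" using card_ge1[OF finite_Pc in3[OF t0]] .
  have "2 \<le> card (Pc A 3) \<or> 2 \<le> card (Pc A 4)"
  proof (cases "U3 E")
    case True
    then have "\<not> U4 E" using notU by blast
    then have "\<exists>a b c d a' b' c' d'. a < b \<and> b < c \<and> c < d \<and> a' < b' \<and> b' < c' \<and> c' < d'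
       \<and> irr4 E a b c d \<and> irr4 E a' b' c' d' \<and> tp4 E a b c d \<noteq> tp4 E a' b' c' d'"
      unfolding U4_def by simp
    then obtain a b c d a' b' c' d' where q: "a < b" "b < c" "c < d" "a' < b'" "b' < c'" "c' < d'"
       "irr4 E a b c d" "irr4 E a' b' c' d'" "tp4 E a b c d \<noteq> tp4 E a' b' c' d'" by blast
    have "induced A {a,b,c,d} \<noteq> induced A {a',b',c',d'}"
      using tp4_eq[OF q(1-6) og] q(9) E_def by blast
    then have "2 \<le> card (Pc A 4)" using card_ge2[OF finite_Pc in4[OF q(1,2,3,7)] in4[OF q(4,5,6,8)]] by blast
    then show ?thesis by simp
  next
    case False
    then have "\<exists>a b c a' b' c'. a < b \<and> b < c \<and> a' < b' \<and> b' < c'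
       \<and> irr3 E a b c \<and> irr3 E a' b' c' \<and> tp3 E a b c \<noteq> tp3 E a' b' c'"
      unfolding U3_def by simp
    then obtain a b c a' b' c' where q: "a < b" "b < c" "a' < b'" "b' < c'"
       "irr3 E a b c" "irr3 E a' b' c'" "tp3 E a b c \<noteq> tp3 E a' b' c'" by blast
    have "induced A {a,b,c} \<noteq> induced A {a',b',c'}"
      using tp3_eq[OF q(1-4) og] q(7) E_def by blast
    then have "2 \<le> card (Pc A 3)" using card_ge2[OF finite_Pc in3[OF q(1,2,5)] in3[OF q(3,4,6)]] by blast
    then show ?thesis by simp
  qed
  then show ?thesis using c1 c2 c3 by blast
qed

definition IS :: "ograph \<Rightarrow> nat \<Rightarrow> ograph set" where
  "IS G n = {induced G S | S. S \<subseteq> {1..ord_of G} \<and> card S = n}"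

lemma finite_IS: "finite (IS G n)"
proof -
  have "IS G n \<subseteq> (\<lambda>S. induced G S) ` Pow {1..ord_of G}" unfolding IS_def by blast
  then show ?thesis by (rule finite_subset) simp
qed

lemma IS_0: "IS G 0 = {(0, {})}"
proof -
  have "IS G 0 = {induced G {}}"
  proof (rule set_eqI)
    fix X
    show "X \<in> IS G 0 \<longleftrightarrow> X \<in> {induced G {}}"
    proof
      assume "X \<in> IS G 0"
      then obtain S where S: "X = induced G S" "S \<subseteq> {1..ord_of G}" "card S = 0" unfolding IS_def by blast
      have "finite S" using finite_subset[OF S(2)] by simp
      then have "S = {}" using S(3) by simp
      then show "X \<in> {induced G {}}" using S(1) by simp
    next
      assume "X \<in> {induced G {}}"
      then have "X = induced G {}" by simp
      moreover have "({}::nat set) \<subseteq> {1..ord_of G}" "card ({}::nat set) = 0" by simp_all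
      ultimately show "X \<in> IS G 0" unfolding IS_def by blast
    qed
  qed
  then show ?thesis by (simp add: induced_empty)
qed

lemma card_IS_0: "card (IS G 0) = 1" by (simp add: IS_0)

lemma shift_sub: "R \<subseteq> {1..b} \<Longrightarrow> (\<lambda>x. x + (a::nat)) ` R \<subseteq> {1..a + b}"
proof
  fix y assume R: "R \<subseteq> {1..b}" and "y \<in> (\<lambda>x. x + a) ` R"
  then obtain x where x: "x \<in> R" "y = x + a" by blast
  have "x \<in> {1..b}" using R x(1) by (rule subsetD)
  then show "y \<in> {1..a + b}" using x(2) by simp
qed

lemma card_shift: "card ((\<lambda>x. x + (a::nat)) ` R) = card R"
  by (rule card_image) (simp add: inj_on_def)

lemma IS_skip:
  assumes oA: "is_ograph A" and oB: "is_ograph B"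
  shows "IS B n \<subseteq> IS (osum A B) n"
proof
  fix Y assume "Y \<in> IS B n"
  then obtain R where R: "Y = induced B R" "R \<subseteq> {1..ord_of B}" "card R = n" unfolding IS_def by blast
  have "induced (osum A B) ({} \<union> (\<lambda>x. x + ord_of A) ` R) = osum (induced A {}) (induced B R)"
    by (rule induced_osum[OF oA oB]) (use R in auto)
  then have "induced (osum A B) ((\<lambda>x. x + ord_of A) ` R) = Y"
    using R(1) by (simp add: induced_empty osum_empty)
  moreover have "(\<lambda>x. x + ord_of A) ` R \<subseteq> {1..ord_of (osum A B)}" using shift_sub[OF R(2)] by simp
  moreover have "card ((\<lambda>x. x + ord_of A) ` R) = n" using card_shift R(3) by simp
  ultimately show "Y \<in> IS (osum A B) n" unfolding IS_def by blast
qed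

lemma Pc_props:
  assumes oA: "is_ograph A" and P: "P \<in> Pc A t"
  obtains S where "P = induced A S" "S \<subseteq> {1..ord_of A}" "card S = t" "irreducible_og P" "is_ograph P" "ord_of P = t"
proof -
  obtain S where S: "P = induced A S" "S \<subseteq> {1..ord_of A}" "card S = t" "irreducible_og (induced A S)"
    using P unfolding Pc_def by blast
  have "finite S" using finite_subset[OF S(2)] by simp
  then have "is_ograph P" using is_ograph_induced[OF oA] S(1) by simp
  then show ?thesis using that S by simp
qed

lemma IS_props:
  assumes oB: "is_ograph B" and Y: "Y \<in> IS B m"
  obtains R where "Y = induced B R" "R \<subseteq> {1..ord_of B}" "card R = m" "is_ograph Y"
proof -
  obtain R where R: "Y = induced B R" "R \<subseteq> {1..ord_of B}" "card R = m"
    using Y unfolding IS_def by blast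
  have "finite R" using finite_subset[OF R(2)] by simp
  then have "is_ograph Y" using is_ograph_induced[OF oB] R(1) by simp
  then show ?thesis using that R by simp
qed

lemma IS_comb:
  assumes oA: "is_ograph A" and oB: "is_ograph B" and P: "P \<in> Pc A t" and Y: "Y \<in> IS B m"
  shows "osum P Y \<in> IS (osum A B) (t + m)"
proof -
  obtain S where S: "P = induced A S" "S \<subseteq> {1..ord_of A}" "card S = t" using Pc_props[OF oA P] by blast
  obtain R where R: "Y = induced B R" "R \<subseteq> {1..ord_of B}" "card R = m" using IS_props[OF oB Y] by blast
  define U where "U = S \<union> (\<lambda>x. x + ord_of A) ` R"
  have eq: "induced (osum A B) U = osum P Y"
    using induced_osum[OF oA oB S(2) R(2)] S(1) R(1) unfolding U_def by simp
  have "{1..ord_of A} \<subseteq> {1..ord_of A + ord_of B}" by simp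
  then have "S \<subseteq> {1..ord_of A + ord_of B}" using S(2) by (rule subset_trans[rotated])
  then have sub: "U \<subseteq> {1..ord_of (osum A B)}"
    unfolding U_def using shift_sub[OF R(2), of "ord_of A"] by simp
  have disj: "S \<inter> (\<lambda>x. x + ord_of A) ` R = {}"
  proof (rule ccontr)
    assume "S \<inter> (\<lambda>x. x + ord_of A) ` R \<noteq> {}"
    then obtain x where x: "x \<in> R" "x + ord_of A \<in> S" by blast
    have "x \<in> {1..ord_of B}" using R(2) x(1) by (rule subsetD)
    moreover have "x + ord_of A \<in> {1..ord_of A}" using S(2) x(2) by (rule subsetD)
    ultimately show False by simp
  qed
  have fS: "finite S" using finite_subset[OF S(2)] by simp
  have fR: "finite R" using finite_subset[OF R(2)] by simp
  have "card U = t + m"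
    unfolding U_def using card_Un_disjoint[OF fS finite_imageI[OF fR] disj] card_shift S(3) R(3) by simp
  then have "osum P Y = induced (osum A B) U \<and> U \<subseteq> {1..ord_of (osum A B)} \<and> card U = t + m"
    using eq sub by simp
  then show ?thesis unfolding IS_def by blast
qed

lemma le_mult1: "1 \<le> (c::nat) \<Longrightarrow> x \<le> a \<Longrightarrow> x \<le> c * a"
proof -
  assume a: "1 \<le> c" "x \<le> a"
  have "1 * a \<le> c * a" using a(1) by (rule mult_le_mono1)
  then have "a \<le> c * a" by (simp only: mult_1)
  then show ?thesis using a(2) by (rule le_trans[rotated])
qed

lemma Tset1: "n = 1 \<Longrightarrow> {t::nat. 1 \<le> t \<and> t \<le> 4 \<and> t \<le> n} = {1}"
  by (rule set_eqI) (simp, presburger)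
lemma Tset2: "n = 2 \<Longrightarrow> {t::nat. 1 \<le> t \<and> t \<le> 4 \<and> t \<le> n} = {1,2}"
  by (rule set_eqI) (simp, presburger)
lemma Tset3: "n = 3 \<Longrightarrow> {t::nat. 1 \<le> t \<and> t \<le> 4 \<and> t \<le> n} = {1,2,3}"
  by (rule set_eqI) (simp, presburger)
lemma Tset4: "4 \<le> n \<Longrightarrow> {t::nat. 1 \<le> t \<and> t \<le> 4 \<and> t \<le> n} = {1,2,3,4}"
  by (rule set_eqI) (simp, presburger)

lemma arith:
  fixes c a :: "nat \<Rightarrow> nat"
  assumes c1: "1 \<le> c 1" and c2: "1 \<le> c 2" and c34: "2 \<le> c 3 \<or> (1 \<le> c 3 \<and> 2 \<le> c 4)"
    and n1: "1 \<le> n" and IH: "\<And>m. m < n \<Longrightarrow> 2 ^ (m - 1) \<le> a m"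
  shows "2 ^ (n - 1) \<le> (\<Sum>t\<in>{t. 1 \<le> t \<and> t \<le> 4 \<and> t \<le> n}. c t * a (n - t))"
proof -
  have c3: "1 \<le> c 3" using c34 by auto
  define x1 where "x1 = c 1 * a (n - 1)"
  define x2 where "x2 = c 2 * a (n - 2)"
  define x3 where "x3 = c 3 * a (n - 3)"
  define x4 where "x4 = c 4 * a (n - 4)"
  consider "n = 1" | "n = 2" | "n = 3" | "n = 4" | "5 \<le> n" using n1 by linarith
  then show ?thesis
  proof cases
    case 1
    have S: "(\<Sum>t\<in>{t. 1 \<le> t \<and> t \<le> 4 \<and> t \<le> n}. c t * a (n - t)) = x1"
      unfolding Tset1[OF 1] x1_def by simp
    have "1 \<le> a (n - 1)" using IH[of "n - 1"] 1 by simp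
    then have "1 \<le> x1" unfolding x1_def by (rule le_mult1[OF c1])
    then show ?thesis using S 1 by simp
  next
    case 2
    have S: "(\<Sum>t\<in>{t. 1 \<le> t \<and> t \<le> 4 \<and> t \<le> n}. c t * a (n - t)) = x1 + x2"
      unfolding Tset2[OF 2] x1_def x2_def by simp
    have "1 \<le> a (n - 1)" "1 \<le> a (n - 2)" using IH[of "n - 1"] IH[of "n - 2"] 2 by simp_all
    then have "1 \<le> x1" "1 \<le> x2" unfolding x1_def x2_def using le_mult1[OF c1] le_mult1[OF c2] by blast+
    then show ?thesis using S 2 by simp
  next
    case 3
    have S: "(\<Sum>t\<in>{t. 1 \<le> t \<and> t \<le> 4 \<and> t \<le> n}. c t * a (n - t)) = x1 + x2 + x3"
      unfolding Tset3[OF 3] x1_def x2_def x3_def by simp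
    have "2 \<le> a (n - 1)" "1 \<le> a (n - 2)" "1 \<le> a (n - 3)" using IH[of "n - 1"] IH[of "n - 2"] IH[of "n - 3"] 3 by simp_all
    then have "2 \<le> x1" "1 \<le> x2" "1 \<le> x3" unfolding x1_def x2_def x3_def
      using le_mult1[OF c1] le_mult1[OF c2] le_mult1[OF c3] by blast+
    then show ?thesis using S 3 by simp
  next
    case 4
    have S: "(\<Sum>t\<in>{t. 1 \<le> t \<and> t \<le> 4 \<and> t \<le> n}. c t * a (n - t)) = x1 + x2 + x3 + x4"
      using Tset4[of n] 4 unfolding x1_def x2_def x3_def x4_def by simp
    have "4 \<le> a (n - 1)" "2 \<le> a (n - 2)" "1 \<le> a (n - 3)" "1 \<le> a (n - 4)"
      using IH[of "n - 1"] IH[of "n - 2"] IH[of "n - 3"] IH[of "n - 4"] 4 by simp_all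
    then have "4 \<le> x1" "2 \<le> x2" "c 3 * 1 \<le> x3" "c 4 * 1 \<le> x4" unfolding x1_def x2_def x3_def x4_def
      using le_mult1[OF c1] le_mult1[OF c2] mult_le_mono2 by blast+
    moreover have "2 \<le> c 3 + c 4" using c34 by auto
    ultimately show ?thesis using S 4 by simp
  next
    case 5
    define k where "k = n - 5"
    define q :: nat where "q = 2 ^ k"
    have nk: "n = k + 5" using 5 k_def by simp
    have S: "(\<Sum>t\<in>{t. 1 \<le> t \<and> t \<le> 4 \<and> t \<le> n}. c t * a (n - t)) = x1 + x2 + x3 + x4"
      using Tset4[of n] 5 unfolding x1_def x2_def x3_def x4_def by simp
    have p1: "2 ^ (n - 1 - 1) = 8 * q" "2 ^ (n - 2 - 1) = 4 * q" "2 ^ (n - 3 - 1) = 2 * q" "2 ^ (n - 4 - 1) = q"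
      "2 ^ (n - 1) = 16 * q" using nk q_def by (simp_all add: power_add)
    have a4: "8 * q \<le> a (n - 1)" using IH[of "n - 1"] p1(1) 5 by simp
    have a3: "4 * q \<le> a (n - 2)" using IH[of "n - 2"] p1(2) 5 by simp
    have a2: "2 * q \<le> a (n - 3)" using IH[of "n - 3"] p1(3) 5 by simp
    have a1: "q \<le> a (n - 4)" using IH[of "n - 4"] p1(4) 5 by simp
    have b4: "8 * q \<le> x1" unfolding x1_def using le_mult1[OF c1 a4] .
    have b3: "4 * q \<le> x2" unfolding x2_def using le_mult1[OF c2 a3] .
    have b2: "c 3 * (2 * q) \<le> x3" unfolding x3_def using a2 by (rule mult_le_mono2)
    have b1: "c 4 * q \<le> x4" unfolding x4_def using a1 by (rule mult_le_mono2)
    have "4 \<le> 2 * c 3 + c 4" using c34 by auto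
    then have "4 * q \<le> (2 * c 3 + c 4) * q" by (rule mult_le_mono1)
    then have "4 * q \<le> c 3 * (2 * q) + c 4 * q" by (simp add: algebra_simps)
    then show ?thesis using S b4 b3 b2 b1 p1(5) by linarith
  qed
qed

lemma step:
  assumes oA: "is_ograph A" and iA: "irreducible_og A" and h1: "1 \<le> ord_of A" and nJ: "A \<notin> Jfam"
    and oB: "is_ograph B" and n1: "1 \<le> n" and IH: "\<And>m. m < n \<Longrightarrow> 2 ^ (m - 1) \<le> card (IS B m)"
  shows "2 ^ (n - 1) \<le> card (IS (osum A B) n)"
proof -
  define T where "T = {t::nat. 1 \<le> t \<and> t \<le> 4 \<and> t \<le> n}"
  define D where "D = (\<Union>t\<in>T. Pc A t \<times> IS B (n - t))"
  define F where "F = (\<lambda>(P,Y). osum P Y)"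
  have fT: "finite T" unfolding T_def by (rule finite_subset[of _ "{..4}"]) auto
  have sub: "F ` D \<subseteq> IS (osum A B) n"
  proof
    fix X assume "X \<in> F ` D"
    then obtain u where u: "u \<in> D" "X = F u" by blast
    obtain P Y where PY: "u = (P,Y)" by (cases u)
    obtain t where t0: "t \<in> T" "(P,Y) \<in> Pc A t \<times> IS B (n - t)" using u(1) PY unfolding D_def by blast
    have t: "t \<in> T" "P \<in> Pc A t" "Y \<in> IS B (n - t)" "X = osum P Y"
      using t0 u(2) PY unfolding F_def by auto
    have "osum P Y \<in> IS (osum A B) (t + (n - t))" using IS_comb[OF oA oB t(2) t(3)] .
    moreover have "t + (n - t) = n" using t(1) unfolding T_def by simp
    ultimately show "X \<in> IS (osum A B) n" using t(4) by simp
  qed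
  have memD: "\<exists>t. t \<in> T \<and> fst u \<in> Pc A t \<and> snd u \<in> IS B (n - t)" if "u \<in> D" for u
    using that unfolding D_def by auto
  have inj: "inj_on F D"
  proof (rule inj_onI)
    fix u v assume u: "u \<in> D" and v: "v \<in> D" and e: "F u = F v"
    obtain t where tu: "t \<in> T" "fst u \<in> Pc A t" "snd u \<in> IS B (n - t)" using memD[OF u] by blast
    obtain t' where tv: "t' \<in> T" "fst v \<in> Pc A t'" "snd v \<in> IS B (n - t')" using memD[OF v] by blast
    obtain S where S: "irreducible_og (fst u)" "is_ograph (fst u)" "ord_of (fst u) = t"
      using Pc_props[OF oA tu(2)] by metis
    obtain S' where S': "irreducible_og (fst v)" "is_ograph (fst v)" "ord_of (fst v) = t'"
      using Pc_props[OF oA tv(2)] by metis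
    have Y: "is_ograph (snd u)" using IS_props[OF oB tu(3)] by metis
    have Y': "is_ograph (snd v)" using IS_props[OF oB tv(3)] by metis
    have "1 \<le> t" "1 \<le> t'" using tu(1) tv(1) unfolding T_def by auto
    moreover have "osum (fst u) (snd u) = osum (fst v) (snd v)" using e unfolding F_def by (simp add: case_prod_beta)
    ultimately have "fst u = fst v \<and> snd u = snd v"
      using osum_inj[OF S(2) S'(2) Y Y' S(1) S'(1)] S(3) S'(3) by simp
    then show "u = v" by (simp add: prod_eq_iff)
  qed
  have disj: "(Pc A i \<times> IS B (n - i)) \<inter> (Pc A j \<times> IS B (n - j)) = {}" if "i \<noteq> j" for i j
  proof (rule ccontr)
    assume "(Pc A i \<times> IS B (n - i)) \<inter> (Pc A j \<times> IS B (n - j)) \<noteq> {}"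
    then obtain P where "P \<in> Pc A i" "P \<in> Pc A j" by blast
    then have "ord_of P = i" "ord_of P = j" using Pc_props[OF oA] by metis+
    then show False using that by simp
  qed
  have cardD: "card D = (\<Sum>t\<in>T. card (Pc A t) * card (IS B (n - t)))"
  proof -
    have "card D = (\<Sum>t\<in>T. card (Pc A t \<times> IS B (n - t)))"
      unfolding D_def
    proof (rule card_UN_disjoint[OF fT])
      show "\<forall>i\<in>T. finite (Pc A i \<times> IS B (n - i))" using finite_Pc finite_IS by blast
      show "\<forall>i\<in>T. \<forall>j\<in>T. i \<noteq> j \<longrightarrow> (Pc A i \<times> IS B (n - i)) \<inter> (Pc A j \<times> IS B (n - j)) = {}"
        using disj by blast
    qed
    then show ?thesis by (simp add: card_cartesian_product)
  qed
  have "card D = card (F ` D)" using card_image[OF inj] by simp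
  also have "\<dots> \<le> card (IS (osum A B) n)" using card_mono[OF finite_IS sub] .
  finally have le: "card D \<le> card (IS (osum A B) n)" .
  have pc: "1 \<le> card (Pc A 1) \<and> 1 \<le> card (Pc A 2) \<and>
     (2 \<le> card (Pc A 3) \<or> (1 \<le> card (Pc A 3) \<and> 2 \<le> card (Pc A 4)))"
    using pieces[OF oA iA h1 nJ] .
  have "2 ^ (n - 1) \<le> (\<Sum>t\<in>{t. 1 \<le> t \<and> t \<le> 4 \<and> t \<le> n}. (\<lambda>t. card (Pc A t)) t * (\<lambda>m. card (IS B m)) (n - t))"
  proof (rule arith)
    show "1 \<le> card (Pc A 1)" using pc by blast
    show "1 \<le> card (Pc A 2)" using pc by blast
    show "2 \<le> card (Pc A 3) \<or> (1 \<le> card (Pc A 3) \<and> 2 \<le> card (Pc A 4))" using pc by blast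
    show "1 \<le> n" by fact
    show "\<And>m. m < n \<Longrightarrow> 2 ^ (m - 1) \<le> card (IS B m)" by (rule IH)
  qed
  then show ?thesis using le cardD unfolding T_def by simp
qed

lemma main_count:
  "\<forall>H\<in>set Gs. is_ograph H \<and> 1 \<le> ord_of H \<and> irreducible_og H \<Longrightarrow>
   n \<le> length (filter (\<lambda>H. H \<notin> Jfam) Gs) \<Longrightarrow> 2 ^ (n - 1) \<le> card (IS (osum_list Gs) n)"
proof (induction Gs arbitrary: n)
  case Nil
  then have "n = 0" by simp
  then show ?case using card_IS_0 by simp
next
  case (Cons A Gs)
  define B where "B = osum_list Gs"
  have oB: "is_ograph B" unfolding B_def using Cons.prems(1) is_ograph_osum_list by simp
  have hA: "is_ograph A" "1 \<le> ord_of A" "irreducible_og A" using Cons.prems(1) by auto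
  have IH: "\<And>m. m \<le> length (filter (\<lambda>H. H \<notin> Jfam) Gs) \<Longrightarrow> 2 ^ (m - 1) \<le> card (IS B m)"
    using Cons.IH Cons.prems(1) unfolding B_def by simp
  show ?case
  proof (cases "A \<in> Jfam")
    case True
    then have "n \<le> length (filter (\<lambda>H. H \<notin> Jfam) Gs)" using Cons.prems(2) by simp
    then have "2 ^ (n - 1) \<le> card (IS B n)" by (rule IH)
    also have "\<dots> \<le> card (IS (osum A B) n)" using card_mono[OF finite_IS IS_skip[OF hA(1) oB]] .
    finally show ?thesis unfolding B_def by simp
  next
    case False
    then have nl: "n \<le> Suc (length (filter (\<lambda>H. H \<notin> Jfam) Gs))" using Cons.prems(2) by simp
    show ?thesis
    proof (cases "n = 0")
      case True
      then show ?thesis using card_IS_0 by simp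
    next
      case False
      have "2 ^ (n - 1) \<le> card (IS (osum A B) n)"
      proof (rule step[OF hA(1) hA(3) hA(2) \<open>A \<notin> Jfam\<close> oB])
        show "1 \<le> n" using False by simp
        show "\<And>m. m < n \<Longrightarrow> 2 ^ (m - 1) \<le> card (IS B m)" using IH nl by simp
      qed
      then show ?thesis unfolding B_def by simp
    qed
  qed
qed

theorem lemma19:
  fixes k m :: nat and G :: ograph and Gs :: "ograph list"
  assumes "block_decomp G Gs"
    and "length Gs = m"
    and "card {i. i < m \<and> Gs ! i \<notin> Jfam} \<ge> k"
  shows "\<forall>n \<le> k. S_count n G \<ge> 2 ^ (n - 1)"
proof (intro allI impI)
  fix n assume nk: "n \<le> k"
  have blocks: "\<forall>H\<in>set Gs. is_ograph H \<and> 1 \<le> ord_of H \<and> irreducible_og H" and G: "G = osum_list Gs"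
    using assms(1) unfolding block_decomp_def by auto
  have "card {i. i < m \<and> Gs ! i \<notin> Jfam} = length (filter (\<lambda>H. H \<notin> Jfam) Gs)"
    using length_filter_conv_card[of "\<lambda>H. H \<notin> Jfam" Gs] assms(2) by simp
  then have "n \<le> length (filter (\<lambda>H. H \<notin> Jfam) Gs)" using nk assms(3) by simp
  then have "2 ^ (n - 1) \<le> card (IS (osum_list Gs) n)" using main_count[OF blocks] by blast
  moreover have "S_count n G = card (IS G n)" unfolding S_count_def IS_def by simp
  ultimately show "S_count n G \<ge> 2 ^ (n - 1)" using G by simp
qed

end
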